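(* Let $p$ be an odd prime and let $\zeta\in\mathbb{Z}_p$ be such that $-\zeta$ is not a square modulo $p$. Let $\alpha,\beta,\gamma\in\mathbb{Z}_p$ and let $k\ge0$ be an integer such that: - $p^k\mid\alpha$ and $p^k\mid(\beta-\gamma)$; - $p^{k+1}\nmid\alpha$ or $p^{k+1}\nmid(\beta-\gamma)$. Let $$f(x)=(x^2+p\alpha x+p\beta+\zeta)(x^2-p\alpha x+p\gamma+\zeta).$$ Then every monic degree-$4$ polynomial $g\in\mathbb{Z}_p[x]$ with $g\equiv f\pmod{p^{2k+3}}$ (coefficientwise) is reducible in $\mathbb{Z}_p[x]$.
   Context: Reducible means it can be written as a product of two nonconstant polynomials in $\mathbb{Z}_p[x]$. *)

theory Defs
  imports "HOL-Computational_Algebra.Polynomial" "HOL-Computational_Algebra.Primes" "HOL-Library.Cardinality"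
begin

text \<open>The prime p is encoded as the cardinality of a type of class prime_base.
  The p-adic integers are the inverse limit of the rings Z/p^n Z, represented by
  compatible sequences of canonical residues.\<close>

class prime_base = assumes prime_base: "prime (CARD('a))"


typedef ('p::prime_base) padic =
  "{f :: nat \<Rightarrow> int. \<forall>n. f n = f (Suc n) mod (int CARD('p)) ^ n}"
  by (rule exI[of _ "\<lambda>_. 0"]) simp

setup_lifting type_definition_padic

lemma padic_canon:
  assumes "\<forall>n. f n = f (Suc n) mod (int CARD('p::prime_base)) ^ n"
  shows "f n mod (int CARD('p)) ^ n = f n"
  using assms by (metis mod_mod_trivial)

lemma card_pos_pb: "(0::int) < int CARD('p::prime_base)"
  using prime_base[where 'a='p] prime_gt_0_nat by simp

lemma pow_dvd_Suc: "(m::int) ^ n dvd m ^ Suc n" by simp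

lemma padic_compat:
  fixes M :: int
  assumes "\<And>a b c d m. a mod m = c mod m \<Longrightarrow> b mod m = d mod m \<Longrightarrow> op a b mod m = op c d mod m"
    and "\<And>n. f n = f (Suc n) mod M ^ n" and "\<And>n. g n = g (Suc n) mod M ^ n"
  shows "op (f n) (g n) mod M ^ n = op (f (Suc n)) (g (Suc n)) mod M ^ Suc n mod M ^ n"
proof -
  have "op (f (Suc n)) (g (Suc n)) mod M ^ Suc n mod M ^ n = op (f (Suc n)) (g (Suc n)) mod M ^ n"
    by (rule mod_mod_cancel) simp
  also have "\<dots> = op (f n) (g n) mod M ^ n"
    using assms(2,3) by (intro assms(1)) (metis mod_mod_trivial)+
  finally show ?thesis ..
qed

lemma mod_uminus_cong2: "(a::int) mod m = c mod m \<Longrightarrow> b mod m = d mod m \<Longrightarrow> (- a) mod m = (- c) mod m"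
  by (rule mod_minus_cong)

lemma padic_compat1:
  fixes M :: int
  assumes "\<And>n. f n = f (Suc n) mod M ^ n"
  shows "(- f n) mod M ^ n = (- f (Suc n)) mod M ^ Suc n mod M ^ n"
proof -
  have "(- f (Suc n)) mod M ^ Suc n mod M ^ n = (- f (Suc n)) mod M ^ n"
    by (rule mod_mod_cancel) simp
  also have "\<dots> = (- f n) mod M ^ n"
    using assms[of n] by (metis mod_minus_cong mod_mod_trivial)
  finally show ?thesis ..
qed

instantiation padic :: (prime_base) comm_ring_1
begin

lift_definition zero_padic :: "'a padic" is "\<lambda>_. 0" by simp
lift_definition one_padic :: "'a padic" is "\<lambda>n. 1 mod (int CARD('a)) ^ n"
  by (simp add: mod_mod_cancel)
lift_definition plus_padic :: "'a padic \<Rightarrow> 'a padic \<Rightarrow> 'a padic"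
  is "\<lambda>f g n. (f n + g n) mod (int CARD('a)) ^ n"
  by (rule padic_compat[OF mod_add_cong])
lift_definition uminus_padic :: "'a padic \<Rightarrow> 'a padic"
  is "\<lambda>f n. (- f n) mod (int CARD('a)) ^ n"
  by (rule padic_compat1)
lift_definition minus_padic :: "'a padic \<Rightarrow> 'a padic \<Rightarrow> 'a padic"
  is "\<lambda>f g n. (f n - g n) mod (int CARD('a)) ^ n"
  by (rule padic_compat[OF mod_diff_cong])
lift_definition times_padic :: "'a padic \<Rightarrow> 'a padic \<Rightarrow> 'a padic"
  is "\<lambda>f g n. (f n * g n) mod (int CARD('a)) ^ n"
  by (rule padic_compat[OF mod_mult_cong])

lemma Rep_padic_canon: "Rep_padic (a :: 'a padic) n mod (int CARD('a)) ^ n = Rep_padic a n"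
  using Rep_padic[of a] by (metis (mono_tags, lifting) mem_Collect_eq mod_mod_trivial)

lemma padic_eqI: "(\<And>n. Rep_padic (a :: 'a padic) n = Rep_padic b n) \<Longrightarrow> a = b"
  by (metis Rep_padic_inject ext)

instance
proof
  fix a b c :: "'a padic"
  show "a * b * c = a * (b * c)"
    by (rule padic_eqI) (simp add: times_padic.rep_eq mod_mult_left_eq mod_mult_right_eq mult.assoc)
  show "a * b = b * a"
    by (rule padic_eqI) (simp add: times_padic.rep_eq mult.commute)
  show "1 * a = a"
    by (rule padic_eqI) (simp add: times_padic.rep_eq one_padic.rep_eq mod_mult_left_eq Rep_padic_canon)
  show "a + b + c = a + (b + c)"
    by (rule padic_eqI) (simp add: plus_padic.rep_eq mod_add_left_eq mod_add_right_eq add.assoc)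
  show "a + b = b + a"
    by (rule padic_eqI) (simp add: plus_padic.rep_eq add.commute)
  show "0 + a = a"
    by (rule padic_eqI) (simp add: plus_padic.rep_eq zero_padic.rep_eq Rep_padic_canon)
  show "- a + a = 0"
    by (rule padic_eqI) (simp add: plus_padic.rep_eq uminus_padic.rep_eq zero_padic.rep_eq mod_add_left_eq)
  show "a - b = a + - b"
    by (rule padic_eqI) (simp add: plus_padic.rep_eq uminus_padic.rep_eq minus_padic.rep_eq mod_add_right_eq)
  show "(a + b) * c = a * c + b * c"
    by (rule padic_eqI) (simp add: plus_padic.rep_eq times_padic.rep_eq mod_mult_left_eq mod_add_eq distrib_right)
  show "(0::'a padic) \<noteq> 1"
  proof
    assume "(0::'a padic) = 1"
    then have "Rep_padic (0::'a padic) 1 = Rep_padic (1::'a padic) 1" by simp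
    moreover have "1 < int CARD('a)"
      using prime_base[where 'a='a] prime_gt_1_nat by simp
    ultimately show False by (simp add: zero_padic.rep_eq one_padic.rep_eq)
  qed
qed

end

definition reducible_poly :: "'a::comm_ring_1 poly \<Rightarrow> bool" where
  "reducible_poly g \<longleftrightarrow> (\<exists>a b. degree a \<ge> 1 \<and> degree b \<ge> 1 \<and> g = a * b)"

end

theory Submission
  imports Defs
begin

definition pp :: "'p::prime_base padic" where "pp = of_nat CARD('p)"

abbreviation PP :: "'p::prime_base itself \<Rightarrow> int" where "PP _ \<equiv> int CARD('p)"

lemma PP_gt1: "1 < int CARD('p::prime_base)"
  using prime_base[where 'a='p] prime_gt_1_nat by simp

lemma PPn_pos: "0 < (int CARD('p::prime_base))^n"
  using card_pos_pb[where 'p='p] by simp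

lemma rep_range: "0 \<le> Rep_padic (x::'p::prime_base padic) n \<and> Rep_padic x n < (int CARD('p))^n"
  by (metis Rep_padic_canon PPn_pos pos_mod_sign pos_mod_bound)

lemma rep_of_nat: "Rep_padic (of_nat m :: 'p::prime_base padic) n = int m mod (int CARD('p))^n"
proof (induction m)
  case 0 then show ?case by (simp add: zero_padic.rep_eq)
next
  case (Suc m)
  then show ?case by (simp add: plus_padic.rep_eq one_padic.rep_eq mod_add_eq add.commute)
qed

lemma rep_mult: "Rep_padic (a * b :: 'p::prime_base padic) n = (Rep_padic a n * Rep_padic b n) mod (int CARD('p))^n"
  by (simp add: times_padic.rep_eq)

lemma rep_diff: "Rep_padic (a - b :: 'p::prime_base padic) n = (Rep_padic a n - Rep_padic b n) mod (int CARD('p))^n"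
  by (simp add: minus_padic.rep_eq)

lemma rep_Suc: "Rep_padic (x :: 'p::prime_base padic) (Suc n) mod (int CARD('p))^n = Rep_padic x n"
proof -
  have h: "\<forall>n. Rep_padic x n = Rep_padic x (Suc n) mod (int CARD('p))^n"
    using Rep_padic[of x] unfolding mem_Collect_eq by assumption
  show ?thesis using spec[OF h, of n] by (rule sym)
qed

lemma rep_mod_le: "i \<le> j \<Longrightarrow> Rep_padic (x :: 'p::prime_base padic) j mod (int CARD('p))^i = Rep_padic x i"
proof (induction j)
  case 0 then show ?case using Rep_padic_canon[of x 0] by simp
next
  case (Suc j)
  show ?case
  proof (cases "i = Suc j")
    case True then show ?thesis using Rep_padic_canon[of x i] by simp
  next
    case False
    then have "i \<le> j" using Suc by simp
    have "Rep_padic x (Suc j) mod (int CARD('p))^i = Rep_padic x (Suc j) mod (int CARD('p))^j mod (int CARD('p))^i"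
      using \<open>i \<le> j\<close> by (simp add: mod_mod_cancel le_imp_power_dvd)
    then show ?thesis using Suc.IH \<open>i \<le> j\<close> by (simp add: rep_Suc)
  qed
qed

lemma pp_pow: "(pp::'p::prime_base padic) ^ j = of_nat (CARD('p) ^ j)"
  by (simp add: pp_def of_nat_power)

lemma rep_pp_pow: "Rep_padic ((pp::'p::prime_base padic) ^ j) n = (int CARD('p))^j mod (int CARD('p))^n"
  by (simp only: pp_pow rep_of_nat) simp

lemma dvd_rep0: "(pp::'p::prime_base padic) ^ n dvd x \<Longrightarrow> Rep_padic x n = 0"
proof -
  assume "pp ^ n dvd x"
  then obtain y where "x = pp ^ n * y" by blast
  then show ?thesis by (simp add: rep_mult rep_pp_pow)
qed

lemma rep0_dvd:
  assumes h: "Rep_padic (x::'p::prime_base padic) n = 0"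
  shows "(pp::'p padic) ^ n dvd x"
proof -
  let ?M = "int CARD('p)"
  define f where "f = (\<lambda>m. Rep_padic x (m + n) div ?M ^ n)"
  have dv: "?M ^ n dvd Rep_padic x (m + n)" for m
    using rep_mod_le[of n "m+n" x] h by (simp add: mod_eq_0_iff_dvd)
  have comp: "f m = f (Suc m) mod ?M ^ m" for m
  proof -
    obtain Z where Z: "Rep_padic x (Suc m + n) = ?M ^ n * Z" using dv[of "Suc m"] by blast
    have "Rep_padic x (m + n) = Rep_padic x (Suc m + n) mod ?M ^ (m + n)"
      using rep_Suc[of x "m+n"] by simp
    also have "\<dots> = ?M ^ n * (Z mod ?M ^ m)"
    proof -
      have e: "?M^(m+n) = ?M^n * ?M^m" by (simp add: power_add mult.commute)
      show ?thesis by (simp only: Z e mod_mult_mult1)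
    qed
    finally have "Rep_padic x (m + n) = ?M ^ n * (Z mod ?M ^ m)" .
    moreover have "?M ^ n \<noteq> 0" using PPn_pos[where 'p='p and n=n] by simp
    ultimately have "f m = Z mod ?M ^ m" unfolding f_def by simp
    moreover have "f (Suc m) = Z" unfolding f_def using Z \<open>?M ^ n \<noteq> 0\<close> by simp
    ultimately show ?thesis by simp
  qed
  define y :: "'p padic" where "y = Abs_padic f"
  have ry: "Rep_padic y m = f m" for m
  proof -
    have "f \<in> {f. \<forall>n. f n = f (Suc n) mod (int CARD('p)) ^ n}"
      unfolding mem_Collect_eq by (intro allI comp)
    then have "Rep_padic (Abs_padic f :: 'p padic) = f" by (rule Abs_padic_inverse)
    then show ?thesis by (simp only: y_def)
  qed
  have "x = pp ^ n * y"
  proof (rule padic_eqI)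
    fix m
    have "Rep_padic (pp ^ n * y) m = (?M ^ n mod ?M ^ m * f m) mod ?M ^ m"
      by (simp add: rep_mult rep_pp_pow ry)
    also have "\<dots> = (?M ^ n * f m) mod ?M ^ m" by (rule mod_mult_left_eq)
    also have "?M ^ n * f m = Rep_padic x (m + n)"
      unfolding f_def by (rule dvd_mult_div_cancel[OF dv[of m]])
    also have "Rep_padic x (m + n) mod ?M ^ m = Rep_padic x m" by (rule rep_mod_le) simp
    finally show "Rep_padic x m = Rep_padic (pp ^ n * y) m" by simp
  qed
  then show ?thesis by (rule dvdI)
qed

lemma dvd_iff_rep0: "(pp::'p::prime_base padic) ^ n dvd x \<longleftrightarrow> Rep_padic x n = 0"
  using dvd_rep0 rep0_dvd by blast

lemma dvd_diff_rep: "(pp::'p::prime_base padic) ^ n dvd (a - b) \<longleftrightarrow> Rep_padic a n = Rep_padic b n"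
proof -
  have "Rep_padic (a - b) n = 0 \<longleftrightarrow> Rep_padic a n mod (int CARD('p))^n = Rep_padic b n mod (int CARD('p))^n"
    by (simp add: rep_diff mod_eq_dvd_iff mod_eq_0_iff_dvd)
  then show ?thesis by (simp add: dvd_iff_rep0 Rep_padic_canon)
qed

lemma all_dvd_zero: "(\<And>n. (pp::'p::prime_base padic) ^ n dvd x) \<Longrightarrow> x = 0"
  by (rule padic_eqI) (simp add: dvd_iff_rep0 zero_padic.rep_eq)

lemma padic_limit:
  fixes X :: "nat \<Rightarrow> 'p::prime_base padic"
  assumes "\<And>n. pp ^ n dvd (X (Suc n) - X n)"
  shows "\<exists>l. \<forall>n. pp ^ n dvd (l - X n)"
proof -
  define f where "f = (\<lambda>n. Rep_padic (X n) n)"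
  have comp: "f n = f (Suc n) mod (int CARD('p)) ^ n" for n
    using assms[of n] by (simp add: f_def rep_Suc dvd_diff_rep)
  define l :: "'p padic" where "l = Abs_padic f"
  have rl: "Rep_padic l n = f n" for n
  proof -
    have "f \<in> {f. \<forall>n. f n = f (Suc n) mod (int CARD('p)) ^ n}"
      unfolding mem_Collect_eq by (intro allI comp)
    then have "Rep_padic (Abs_padic f :: 'p padic) = f" by (rule Abs_padic_inverse)
    then show ?thesis by (simp only: l_def)
  qed
  show ?thesis by (rule exI[of _ l]) (simp add: dvd_diff_rep rl f_def)
qed

lemma pp_prime:
  assumes "(pp::'p::prime_base padic) dvd x * y"
  shows "pp dvd x \<or> pp dvd y"
proof -
  let ?M = "int CARD('p)"
  have pr: "prime ?M" using prime_base[where 'a='p] by simp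
  have "Rep_padic (x * y) 1 = 0" using assms dvd_rep0[of 1] by simp
  then have "?M dvd Rep_padic x 1 * Rep_padic y 1" by (simp add: rep_mult mod_eq_0_iff_dvd)
  then have "?M dvd Rep_padic x 1 \<or> ?M dvd Rep_padic y 1" using pr prime_dvd_mult_iff by blast
  moreover have "pp dvd z" if "?M dvd Rep_padic z 1" for z :: "'p padic"
  proof -
    have "Rep_padic z 1 mod ?M = 0" using that by simp
    then have "Rep_padic z 1 = 0" using Rep_padic_canon[of z 1] by simp
    then show ?thesis using rep0_dvd[of z 1] by simp
  qed
  ultimately show ?thesis by blast
qed

lemma rep_uminus: "Rep_padic (- a :: 'p::prime_base padic) n = (- Rep_padic a n) mod (int CARD('p))^n"
  by (simp add: uminus_padic.rep_eq)

lemma rep_of_int: "Rep_padic (of_int z :: 'p::prime_base padic) n = z mod (int CARD('p))^n"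
proof (cases z rule: int_cases)
  case (nonneg m)
  then show ?thesis by (simp add: rep_of_nat)
next
  case (neg m)
  then have "(of_int z :: 'p padic) = - of_nat (Suc m)" by simp
  then have "Rep_padic (of_int z :: 'p padic) n = (- (int (Suc m) mod (int CARD('p))^n)) mod (int CARD('p))^n"
    by (simp only: rep_uminus rep_of_nat)
  then show ?thesis using neg by (simp only: mod_minus_eq)
qed

lemma pp_of_int: "(pp :: 'p::prime_base padic) = of_int (int CARD('p))"
  by (simp add: pp_def)

lemma pp_unit:
  assumes nd: "\<not> (pp::'p::prime_base padic) dvd u"
  shows "\<exists>v. u * v = 1"
proof -
  let ?M = "int CARD('p)"
  define r where "r = Rep_padic u 1"
  have "r \<noteq> 0" using nd rep0_dvd[of u 1] by (auto simp: r_def)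
  have r_rng: "0 \<le> r \<and> r < ?M" using rep_range[of u 1] by (simp add: r_def)
  have pr: "prime ?M" using prime_base[where 'a='p] by simp
  have "\<not> ?M dvd r" using \<open>r \<noteq> 0\<close> r_rng by (auto simp: zdvd_not_zless)
  then have "coprime ?M r" using pr by (simp add: prime_imp_coprime)
  then have "gcd r ?M = 1" by (simp add: gcd.commute coprime_iff_gcd_eq_1)
  then obtain s t where st: "s * r + t * ?M = 1" using bezout_int[of r ?M] by metis
  have d1: "pp dvd (u - of_int r)"
  proof -
    have "Rep_padic (u - of_int r) 1 = 0"
      using Rep_padic_canon[of u 1] by (simp add: rep_diff rep_of_int r_def)
    then show ?thesis using rep0_dvd[of "u - of_int r" 1] by simp
  qed
  have eq: "u * of_int s - 1 = (u - of_int r) * of_int s + pp * of_int (- t)"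
  proof -
    have "of_int (s * r + t * ?M) = (1 :: 'p padic)" using st by simp
    then have "of_int s * of_int r + of_int t * pp = (1 :: 'p padic)" by (simp add: pp_of_int)
    then show ?thesis by (simp add: algebra_simps)
  qed
  have "pp dvd (u * of_int s - 1)" unfolding eq using d1 by (intro dvd_add dvd_mult2) simp_all
  then obtain e where e: "u * of_int s - 1 = pp * e" by (rule dvdE)
  define q where "q = - (pp * e)"
  define X where "X = (\<lambda>n. of_int s * (\<Sum>i<n. q ^ i))"
  have q': "q = pp * (- e)" by (simp add: q_def)
  have qn: "q ^ n = pp ^ n * (- e) ^ n" for n unfolding q' by (rule power_mult_distrib)
  have "pp ^ n dvd (X (Suc n) - X n)" for n
  proof -
    have "X (Suc n) - X n = of_int s * q ^ n" by (simp add: X_def distrib_left)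
    also have "\<dots> = pp ^ n * (of_int s * (- e) ^ n)" by (simp only: qn mult.left_commute)
    finally have "X (Suc n) - X n = pp ^ n * (of_int s * (- e) ^ n)" .
    then show ?thesis by simp
  qed
  then obtain l where l: "\<And>n. pp ^ n dvd (l - X n)" using padic_limit by blast
  have uX: "u * X n = 1 - q ^ n" for n
  proof -
    have us: "u * of_int s = 1 - q"
    proof -
      have "u * of_int s = (u * of_int s - 1) + 1" by simp
      also have "\<dots> = 1 - q" unfolding e q_def by simp
      finally show ?thesis .
    qed
    have "u * X n = (1 - q) * (\<Sum>i<n. q ^ i)" by (simp add: X_def us[symmetric] mult.assoc)
    also have "\<dots> = 1 - q ^ n" by (simp add: one_diff_power_eq)
    finally show ?thesis .
  qed
  have "u * l - 1 = 0"
  proof (rule all_dvd_zero)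
    fix n
    have "u * l - 1 = u * (l - X n) + (u * X n - 1)" by (simp add: algebra_simps)
    also have "u * X n - 1 = pp ^ n * (- ((- e) ^ n))" by (simp only: uX qn) simp
    finally have "u * l - 1 = u * (l - X n) + pp ^ n * (- ((- e) ^ n))" .
    then show "pp ^ n dvd (u * l - 1)" using l[of n] by (simp add: dvd_add)
  qed
  then show ?thesis by auto
qed

lemma solve3:
  fixes c0 d0 dl d1 i e2 e1 e0 :: "'a::comm_ring_1"
  assumes inv: "(dl^2 - c0*dl*d1 + d0*d1^2) * i = 1"
  shows "\<exists>W0 v1 v0. W0 + d1*v1 = e2 \<and> c0*W0 + d1*v0 + dl*v1 = e1 \<and> d0*W0 + dl*v0 = e0"
proof (intro exI conjI)
  let ?D = "dl^2 - c0*dl*d1 + d0*d1^2"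
  let ?W0 = "i*(dl^2*e2 - d1*dl*e1 + d1^2*e0)"
  let ?v1 = "i*((d0*d1 - c0*dl)*e2 + dl*e1 - d1*e0)"
  let ?v0 = "i*(- d0*dl*e2 + d1*d0*e1 + (dl - c0*d1)*e0)"
  have "?W0 + d1*?v1 = (?D * i) * e2" by (simp add: algebra_simps power2_eq_square)
  then show "?W0 + d1*?v1 = e2" using inv by simp
  have "c0*?W0 + d1*?v0 + dl*?v1 = (?D * i) * e1" by (simp add: algebra_simps power2_eq_square)
  then show "c0*?W0 + d1*?v0 + dl*?v1 = e1" using inv by simp
  have "d0*?W0 + dl*?v0 = (?D * i) * e0" by (simp add: algebra_simps power2_eq_square)
  then show "d0*?W0 + dl*?v0 = e0" using inv by simp
qed

lemma solve4:
  fixes a0 b0 c0 d0 q a' dl Di e3 e2 e1 e0 :: "'a::comm_ring_1"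
  assumes h: "a0 = q*a'" "c0 = -(q*a')" "b0 = d0 + q*dl"
    and inv: "(dl^2 - c0*dl*(2*a') + d0*(2*a')^2) * Di = 1"
  shows "\<exists>u w y z. u + y = q*e3 \<and> w + z + a0*y + c0*u = q*e2 \<and>
     a0*z + b0*y + c0*w + d0*u = q*e1 \<and> b0*z + d0*w = q*e0"
proof -
  obtain W0 v1 v0 where s: "W0 + (2*a')*v1 = e2 - c0*e3" "c0*W0 + (2*a')*v0 + dl*v1 = e1 - d0*e3"
     "d0*W0 + dl*v0 = e0"
    using solve3[OF inv] by blast
  show ?thesis
  proof (intro exI conjI)
    show "(q*e3 - v1) + v1 = q*e3" by simp
    have "(q*W0 - v0) + v0 + a0*v1 + c0*(q*e3 - v1) = q*(W0 + (2*a')*v1) + c0*q*e3"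
      unfolding h by (simp add: algebra_simps)
    also have "\<dots> = q*e2" unfolding s(1) by (simp add: algebra_simps)
    finally show "(q*W0 - v0) + v0 + a0*v1 + c0*(q*e3 - v1) = q*e2" .
    have "a0*v0 + b0*v1 + c0*(q*W0 - v0) + d0*(q*e3 - v1) = q*(c0*W0 + (2*a')*v0 + dl*v1) + q*d0*e3"
      unfolding h by (simp add: algebra_simps)
    also have "\<dots> = q*e1" unfolding s(2) by (simp add: algebra_simps)
    finally show "a0*v0 + b0*v1 + c0*(q*W0 - v0) + d0*(q*e3 - v1) = q*e1" .
    have "b0*v0 + d0*(q*W0 - v0) = q*(d0*W0 + dl*v0)"
      unfolding h by (simp add: algebra_simps)
    also have "\<dots> = q*e0" unfolding s(3) by simp
    finally show "b0*v0 + d0*(q*W0 - v0) = q*e0" .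
  qed
qed


lemma cross_dvd:
  fixes x y :: "'a::comm_ring_1"
  assumes "s dvd x" "t dvd y" "r dvd s * t"
  shows "r dvd x * y"
  using assms by (meson dvd_trans mult_dvd_mono)

lemma step:
  fixes \<pi> a b c d a0 b0 c0 d0 G3 G2 G1 G0 :: "'a::comm_ring_1"
  assumes solver: "\<And>e3 e2 e1 e0. \<exists>u w y z. u + y = \<pi>^(k+1)*e3 \<and> w + z + a0*y + c0*u = \<pi>^(k+1)*e2 \<and>
     a0*z + b0*y + c0*w + d0*u = \<pi>^(k+1)*e1 \<and> b0*z + d0*w = \<pi>^(k+1)*e0"
    and m: "2*k+3 \<le> m"
    and cl: "\<pi>^(k+2) dvd a - a0" "\<pi>^(k+2) dvd b - b0" "\<pi>^(k+2) dvd c - c0" "\<pi>^(k+2) dvd d - d0"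
    and er: "\<pi>^m dvd a + c - G3" "\<pi>^m dvd b + d + a*c - G2" "\<pi>^m dvd a*d + b*c - G1" "\<pi>^m dvd b*d - G0"
  shows "\<exists>a' b' c' d'. (\<pi>^(m-k-1) dvd a' - a \<and> \<pi>^(m-k-1) dvd b' - b \<and> \<pi>^(m-k-1) dvd c' - c \<and> \<pi>^(m-k-1) dvd d' - d)
     \<and> (\<pi>^(k+2) dvd a' - a0 \<and> \<pi>^(k+2) dvd b' - b0 \<and> \<pi>^(k+2) dvd c' - c0 \<and> \<pi>^(k+2) dvd d' - d0)
     \<and> (\<pi>^(m+1) dvd a' + c' - G3 \<and> \<pi>^(m+1) dvd b' + d' + a'*c' - G2 \<and> \<pi>^(m+1) dvd a'*d' + b'*c' - G1
        \<and> \<pi>^(m+1) dvd b'*d' - G0)"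
proof -
  define R where "R = \<pi>^(m-k-1)"
  define q where "q = \<pi>^(k+1)"
  have Rq: "\<pi>^m = R * q"
  proof -
    have "m = (m-k-1) + (k+1)" using m by simp
    then have "\<pi>^m = \<pi>^(m-k-1) * \<pi>^(k+1)" by (metis power_add)
    then show ?thesis unfolding R_def q_def .
  qed
  have R2: "\<pi>^(k+2) * R = \<pi>^(m+1)"
  proof -
    have "m+1 = (k+2) + (m-k-1)" using m by simp
    then have "\<pi>^(m+1) = \<pi>^(k+2) * \<pi>^(m-k-1)" by (metis power_add)
    then show ?thesis unfolding R_def by simp
  qed
  have RR: "\<pi>^(m+1) dvd R * R"
  proof -
    have "R * R = \<pi>^((m-k-1) + (m-k-1))" unfolding R_def by (simp only: power_add)
    moreover have "m + 1 \<le> (m-k-1) + (m-k-1)" using m by simp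
    ultimately show ?thesis by (simp only: le_imp_power_dvd)
  qed
  have kR: "\<pi>^(k+2) dvd R" unfolding R_def using m by (intro le_imp_power_dvd) simp
  obtain E3 where E3: "a + c - G3 = R*q*E3" using er(1) Rq by (auto elim: dvdE)
  obtain E2 where E2: "b + d + a*c - G2 = R*q*E2" using er(2) Rq by (auto elim: dvdE)
  obtain E1 where E1: "a*d + b*c - G1 = R*q*E1" using er(3) Rq by (auto elim: dvdE)
  obtain E0 where E0: "b*d - G0 = R*q*E0" using er(4) Rq by (auto elim: dvdE)
  obtain u w y z where s: "u + y = q*(-E3)" "w + z + a0*y + c0*u = q*(-E2)"
     "a0*z + b0*y + c0*w + d0*u = q*(-E1)" "b0*z + d0*w = q*(-E0)"
    using solver[of "-E3" "-E2" "-E1" "-E0"] unfolding q_def by blast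
  have X: "\<pi>^(m+1) dvd (x - x0) * (R * v)" if "\<pi>^(k+2) dvd x - x0" for x x0 v
    by (rule cross_dvd[OF that dvd_triv_left]) (simp only: R2 dvd_refl)
  have Y: "\<pi>^(m+1) dvd (R * v) * (R * v')" for v v'
    by (rule cross_dvd[OF dvd_triv_left dvd_triv_left RR])
  show ?thesis
    unfolding R_def[symmetric]
  proof (intro exI conjI)
    show "R dvd (a + R*u) - a" "R dvd (b + R*w) - b" "R dvd (c + R*y) - c" "R dvd (d + R*z) - d"
      by simp_all
    show "\<pi>^(k+2) dvd (a + R*u) - a0" using dvd_add[OF cl(1) dvd_mult2[OF kR, of u]] by (simp add: algebra_simps)
    show "\<pi>^(k+2) dvd (b + R*w) - b0" using dvd_add[OF cl(2) dvd_mult2[OF kR, of w]] by (simp add: algebra_simps)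
    show "\<pi>^(k+2) dvd (c + R*y) - c0" using dvd_add[OF cl(3) dvd_mult2[OF kR, of y]] by (simp add: algebra_simps)
    show "\<pi>^(k+2) dvd (d + R*z) - d0" using dvd_add[OF cl(4) dvd_mult2[OF kR, of z]] by (simp add: algebra_simps)
    have "(a + R*u) + (c + R*y) - G3 = (a + c - G3 - R*q*E3) + R*(u + y - q*(-E3))"
      by (simp add: algebra_simps)
    then show "\<pi>^(m+1) dvd (a + R*u) + (c + R*y) - G3" using E3 s(1) by simp
    have "(b + R*w) + (d + R*z) + (a + R*u)*(c + R*y) - G2 = (b + d + a*c - G2 - R*q*E2)
       + R*(w + z + a0*y + c0*u - q*(-E2)) + (a - a0)*(R*y) + (c - c0)*(R*u) + (R*u)*(R*y)"
      by (simp add: algebra_simps)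
    then show "\<pi>^(m+1) dvd (b + R*w) + (d + R*z) + (a + R*u)*(c + R*y) - G2"
      using E2 s(2) X[OF cl(1)] X[OF cl(3)] Y by (simp add: dvd_add)
    have "(a + R*u)*(d + R*z) + (b + R*w)*(c + R*y) - G1 = (a*d + b*c - G1 - R*q*E1)
       + R*(a0*z + b0*y + c0*w + d0*u - q*(-E1)) + (a - a0)*(R*z) + (d - d0)*(R*u)
       + (b - b0)*(R*y) + (c - c0)*(R*w) + (R*u)*(R*z) + (R*w)*(R*y)"
      by (simp add: algebra_simps)
    then show "\<pi>^(m+1) dvd (a + R*u)*(d + R*z) + (b + R*w)*(c + R*y) - G1"
      using E1 s(3) X[OF cl(1)] X[OF cl(4)] X[OF cl(2)] X[OF cl(3)] Y by (simp add: dvd_add)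
    have "(b + R*w)*(d + R*z) - G0 = (b*d - G0 - R*q*E0)
       + R*(b0*z + d0*w - q*(-E0)) + (b - b0)*(R*z) + (d - d0)*(R*w) + (R*w)*(R*z)"
      by (simp add: algebra_simps)
    then show "\<pi>^(m+1) dvd (b + R*w)*(d + R*z) - G0"
      using E0 s(4) X[OF cl(2)] X[OF cl(4)] Y by (simp add: dvd_add)
  qed
qed

lemma iterate_seq:
  assumes "P 0 x0" "\<And>n x. P n x \<Longrightarrow> \<exists>y. P (Suc n) y \<and> Q n x y"
  shows "\<exists>X. (\<forall>n. P n (X n)) \<and> (\<forall>n. Q n (X n) (X (Suc n)))"
proof -
  define X where "X = rec_nat x0 (\<lambda>n x. SOME y. P (Suc n) y \<and> Q n x y)"
  have XS: "X (Suc n) = (SOME y. P (Suc n) y \<and> Q n (X n) y)" for n by (simp add: X_def)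
  have PX: "P n (X n)" for n
  proof (induction n)
    case 0 then show ?case using assms(1) by (simp add: X_def)
  next
    case (Suc n)
    then show ?case unfolding XS using someI_ex[OF assms(2)[OF Suc]] by blast
  qed
  have "Q n (X n) (X (Suc n))" for n
    unfolding XS using someI_ex[OF assms(2)[OF PX[of n]]] by blast
  then show ?thesis using PX by blast
qed

lemma lift:
  fixes a0 b0 c0 d0 G3 G2 G1 G0 :: "'p::prime_base padic"
  assumes solver: "\<And>e3 e2 e1 e0. \<exists>u w y z. u + y = pp^(k+1)*e3 \<and> w + z + a0*y + c0*u = pp^(k+1)*e2 \<and>
     a0*z + b0*y + c0*w + d0*u = pp^(k+1)*e1 \<and> b0*z + d0*w = pp^(k+1)*e0"
    and er: "pp^(2*k+3) dvd a0 + c0 - G3" "pp^(2*k+3) dvd b0 + d0 + a0*c0 - G2"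
      "pp^(2*k+3) dvd a0*d0 + b0*c0 - G1" "pp^(2*k+3) dvd b0*d0 - G0"
  shows "\<exists>a b c d. a + c = G3 \<and> b + d + a*c = G2 \<and> a*d + b*c = G1 \<and> b*d = G0"
proof -
  define P :: "nat \<Rightarrow> 'p padic \<times> 'p padic \<times> 'p padic \<times> 'p padic \<Rightarrow> bool"
    where "P = (\<lambda>n (a, b, c, d).
      (pp^(k+2) dvd a - a0 \<and> pp^(k+2) dvd b - b0 \<and> pp^(k+2) dvd c - c0 \<and> pp^(k+2) dvd d - d0)
     \<and> (pp^(2*k+3+n) dvd a + c - G3 \<and> pp^(2*k+3+n) dvd b + d + a*c - G2 \<and> pp^(2*k+3+n) dvd a*d + b*c - G1
        \<and> pp^(2*k+3+n) dvd b*d - (G0::'p padic)))"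
  define Q :: "nat \<Rightarrow> 'p padic \<times> 'p padic \<times> 'p padic \<times> 'p padic \<Rightarrow> 'p padic \<times> 'p padic \<times> 'p padic \<times> 'p padic \<Rightarrow> bool"
    where "Q = (\<lambda>n (a, b, c, d) (a', b', c', d').
      pp^n dvd a' - a \<and> pp^n dvd b' - b \<and> pp^n dvd c' - c \<and> pp^n dvd d' - (d::'p padic))"
  have P0: "P 0 (a0, b0, c0, d0)" unfolding P_def using er by simp
  have PS: "\<exists>y. P (Suc n) y \<and> Q n x y" if "P n x" for n x
  proof -
    obtain a b c d where x: "x = (a, b, c, d)" by (cases x) auto
    let ?m = "2*k+3+n"
    have h: "pp^(k+2) dvd a - a0" "pp^(k+2) dvd b - b0" "pp^(k+2) dvd c - c0" "pp^(k+2) dvd d - d0"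
      "pp^?m dvd a + c - G3" "pp^?m dvd b + d + a*c - G2" "pp^?m dvd a*d + b*c - G1" "pp^?m dvd b*d - G0"
      using that unfolding x P_def by simp_all
    have le: "2*k+3 \<le> ?m" by simp
    obtain a' b' c' d' where st:
      "pp^(?m-k-1) dvd a' - a" "pp^(?m-k-1) dvd b' - b" "pp^(?m-k-1) dvd c' - c" "pp^(?m-k-1) dvd d' - d"
      "pp^(k+2) dvd a' - a0" "pp^(k+2) dvd b' - b0" "pp^(k+2) dvd c' - c0" "pp^(k+2) dvd d' - d0"
      "pp^(?m+1) dvd a' + c' - G3" "pp^(?m+1) dvd b' + d' + a'*c' - G2" "pp^(?m+1) dvd a'*d' + b'*c' - G1"
      "pp^(?m+1) dvd b'*d' - G0"
      using step[OF solver le h] by blast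
    have nn: "(pp::'p padic)^n dvd pp^(?m-k-1)" by (intro le_imp_power_dvd) simp
    show ?thesis
    proof (intro exI conjI)
      show "P (Suc n) (a', b', c', d')" unfolding P_def using st by simp
      show "Q n x (a', b', c', d')" unfolding Q_def x using st(1-4) dvd_trans[OF nn] by simp
    qed
  qed
  obtain X where X: "\<And>n. P n (X n)" "\<And>n. Q n (X n) (X (Suc n))"
    using iterate_seq[of P "(a0, b0, c0, d0)" Q, OF P0 PS] by blast
  define A where "A = (\<lambda>n. fst (X n))"
  define B where "B = (\<lambda>n. fst (snd (X n)))"
  define C where "C = (\<lambda>n. fst (snd (snd (X n))))"
  define D where "D = (\<lambda>n. snd (snd (snd (X n))))"
  have Xn: "X n = (A n, B n, C n, D n)" for n by (simp add: A_def B_def C_def D_def)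
  have QX: "pp^n dvd A (Suc n) - A n" "pp^n dvd B (Suc n) - B n" "pp^n dvd C (Suc n) - C n"
     "pp^n dvd D (Suc n) - D n" for n
    using X(2)[of n] unfolding Xn Q_def by simp_all
  have PX: "pp^(2*k+3+n) dvd A n + C n - G3" "pp^(2*k+3+n) dvd B n + D n + A n * C n - G2"
     "pp^(2*k+3+n) dvd A n * D n + B n * C n - G1" "pp^(2*k+3+n) dvd B n * D n - G0" for n
    using X(1)[of n] unfolding Xn P_def by simp_all
  have PXn: "pp^n dvd A n + C n - G3" "pp^n dvd B n + D n + A n * C n - G2"
     "pp^n dvd A n * D n + B n * C n - G1" "pp^n dvd B n * D n - G0" for n
  proof -
    have nn: "(pp::'p padic)^n dvd pp^(2*k+3+n)" by (intro le_imp_power_dvd) simp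
    show "pp^n dvd A n + C n - G3" "pp^n dvd B n + D n + A n * C n - G2"
     "pp^n dvd A n * D n + B n * C n - G1" "pp^n dvd B n * D n - G0"
      using PX[of n] dvd_trans[OF nn] by blast+
  qed
  obtain la where la: "\<And>n. pp^n dvd la - A n" using padic_limit[OF QX(1)] by blast
  obtain lb where lb: "\<And>n. pp^n dvd lb - B n" using padic_limit[OF QX(2)] by blast
  obtain lc where lc: "\<And>n. pp^n dvd lc - C n" using padic_limit[OF QX(3)] by blast
  obtain ld where ld: "\<And>n. pp^n dvd ld - D n" using padic_limit[OF QX(4)] by blast
  show ?thesis
  proof (intro exI conjI)
    have "la + lc - G3 = 0"
    proof (rule all_dvd_zero)
      fix n
      have e: "la + lc - G3 = (A n + C n - G3) + (la - A n) + (lc - C n)" by (simp add: algebra_simps)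
      show "pp^n dvd la + lc - G3" unfolding e using PXn(1)[of n] la[of n] lc[of n] by (blast intro: dvd_add dvd_mult2 dvd_mult)
    qed
    then show "la + lc = G3" by simp
    have "lb + ld + la*lc - G2 = 0"
    proof (rule all_dvd_zero)
      fix n
      have e: "lb + ld + la*lc - G2 = (B n + D n + A n * C n - G2) + (lb - B n) + (ld - D n)
          + (la - A n) * lc + A n * (lc - C n)" by (simp add: algebra_simps)
      show "pp^n dvd lb + ld + la*lc - G2" unfolding e using PXn(2)[of n] la[of n] lb[of n] lc[of n] ld[of n] by (blast intro: dvd_add dvd_mult2 dvd_mult)
    qed
    then show "lb + ld + la*lc = G2" by simp
    have "la*ld + lb*lc - G1 = 0"
    proof (rule all_dvd_zero)
      fix n
      have e: "la*ld + lb*lc - G1 = (A n * D n + B n * C n - G1) + (la - A n) * ld + A n * (ld - D n)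
          + (lb - B n) * lc + B n * (lc - C n)" by (simp add: algebra_simps)
      show "pp^n dvd la*ld + lb*lc - G1" unfolding e using PXn(3)[of n] la[of n] lb[of n] lc[of n] ld[of n] by (blast intro: dvd_add dvd_mult2 dvd_mult)
    qed
    then show "la*ld + lb*lc = G1" by simp
    have "lb*ld - G0 = 0"
    proof (rule all_dvd_zero)
      fix n
      have e: "lb*ld - G0 = (B n * D n - G0) + (lb - B n) * ld + B n * (ld - D n)" by (simp add: algebra_simps)
      show "pp^n dvd lb*ld - G0" unfolding e using PXn(4)[of n] lb[of n] ld[of n] by (blast intro: dvd_add dvd_mult2 dvd_mult)
    qed
    then show "lb*ld = G0" by simp
  qed
qed

lemma pp_not_dvd_2:
  assumes "odd CARD('p::prime_base)"
  shows "\<not> (pp::'p padic) dvd 2"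
proof
  assume "(pp::'p padic) dvd 2"
  then have "Rep_padic (2::'p padic) 1 = 0" using dvd_rep0[of 1 "2::'p padic"] by simp
  moreover have "Rep_padic (2::'p padic) 1 = 2 mod int CARD('p)"
    using rep_of_nat[of 2 1, where 'p='p] by simp
  ultimately have "2 mod int CARD('p) = 0" by simp
  then have "int CARD('p) dvd 2" by (simp add: mod_eq_0_iff_dvd)
  then have "int CARD('p) dvd int 2" by simp
  then have "CARD('p) dvd 2" by (simp only: int_dvd_int_iff)
  then have "CARD('p) \<le> 2" by (simp add: dvd_imp_le)
  moreover have "CARD('p) \<ge> 2" using prime_base[where 'a='p] prime_ge_2_nat by blast
  ultimately have "CARD('p) = 2" by simp
  then show False using assms by simp
qed

lemma poly_prod_quad: "[:b, a, 1:] * [:d, c, 1:] = [:b*d, a*d + b*c, b + d + a*c, a + c, (1::'a::comm_ring_1):]"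
  by (simp add: algebra_simps)

theorem claim1:
  fixes \<zeta> \<alpha> \<beta> \<gamma> :: "'p::prime_base padic" and k :: nat
  defines "p \<equiv> (of_nat CARD('p) :: 'p padic)"
  assumes odd_p: "odd CARD('p)"
    and nonsq: "\<not> (\<exists>y::'p padic. p dvd (y ^ 2 - (- \<zeta>)))"
    and div_k: "p ^ k dvd \<alpha>" "p ^ k dvd (\<beta> - \<gamma>)"
    and ndiv_k1: "\<not> p ^ (k + 1) dvd \<alpha> \<or> \<not> p ^ (k + 1) dvd (\<beta> - \<gamma>)"
  shows "\<forall>g :: 'p padic poly.
           degree g = 4 \<and> lead_coeff g = 1 \<and>
           (\<forall>i. p ^ (2 * k + 3) dvd (coeff g i -
              coeff ([:p * \<beta> + \<zeta>, p * \<alpha>, 1:] * [:p * \<gamma> + \<zeta>, - (p * \<alpha>), 1:]) i))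
           \<longrightarrow> reducible_poly g"
proof (intro allI impI)
  fix g :: "'p padic poly"
  assume g: "degree g = 4 \<and> lead_coeff g = 1 \<and>
           (\<forall>i. p ^ (2 * k + 3) dvd (coeff g i -
              coeff ([:p * \<beta> + \<zeta>, p * \<alpha>, 1:] * [:p * \<gamma> + \<zeta>, - (p * \<alpha>), 1:]) i))"
  have pp: "p = pp" by (simp add: p_def pp_def)
  obtain a' where a': "\<alpha> = p^k * a'" using div_k(1) by (rule dvdE)
  obtain dl where dl: "\<beta> - \<gamma> = p^k * dl" using div_k(2) by (rule dvdE)
  define q where "q = p^(k+1)"
  define a0 where "a0 = p * \<alpha>"
  define b0 where "b0 = p * \<beta> + \<zeta>"
  define c0 where "c0 = - (p * \<alpha>)"
  define d0 where "d0 = p * \<gamma> + \<zeta>"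
  have ha0: "a0 = q * a'" unfolding a0_def q_def a' by simp
  have hc0: "c0 = - (q * a')" unfolding c0_def q_def a' by simp
  have hb0: "b0 = d0 + q * dl"
  proof -
    have "p * \<beta> = p * \<gamma> + p * (\<beta> - \<gamma>)" by (simp add: algebra_simps)
    then show ?thesis unfolding b0_def d0_def q_def dl by (simp add: algebra_simps)
  qed
  define N where "N = dl^2 + \<zeta> * (2*a')^2"
  have NN: "\<not> p dvd N"
  proof
    assume pN: "p dvd N"
    show False
    proof (cases "p dvd a'")
      case True
      then have "p dvd \<zeta> * (2*a')^2" by (simp add: power2_eq_square)
      then have "p dvd N - \<zeta> * (2*a')^2" using pN by (rule dvd_diff[rotated])
      then have "p dvd dl * dl" by (simp add: N_def power2_eq_square)
      then have "p dvd dl" using pp_prime[of dl dl] unfolding pp by blast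
      then have "p^k * p dvd p^k * a'" "p^k * p dvd p^k * dl"
        using True by (simp_all add: mult_dvd_mono)
      then have "p^(k+1) dvd \<alpha>" "p^(k+1) dvd \<beta> - \<gamma>" unfolding a' dl by (simp_all add: mult.commute)
      then show False using ndiv_k1 by blast
    next
      case False
      have "\<not> p dvd 2 * a'" using pp_prime[of 2 a'] pp_not_dvd_2[OF odd_p] False unfolding pp by blast
      then obtain i where i: "2 * a' * i = 1" using pp_unit unfolding pp by blast
      have "(dl * i)^2 - (- \<zeta>) = i^2 * N"
      proof -
        have "i^2 * N = (dl*i)^2 + \<zeta> * (2 * a' * i)^2" by (simp add: N_def algebra_simps power2_eq_square)
        then show ?thesis using i by simp
      qed
      then have "p dvd (dl * i)^2 - (- \<zeta>)" using pN by simp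
      then show False using nonsq by blast
    qed
  qed
  define Dl where "Dl = dl^2 - c0*dl*(2*a') + d0*(2*a')^2"
  have "Dl = N + p * (2 * \<alpha> * dl * a' + 4 * \<gamma> * a'^2)"
    unfolding Dl_def N_def c0_def d0_def by (simp add: algebra_simps power2_eq_square)
  then have "\<not> p dvd Dl"
    using NN dvd_diff[OF _ dvd_triv_left, of p Dl "2 * \<alpha> * dl * a' + 4 * \<gamma> * a'^2"] by auto
  then obtain Di where Di: "Dl * Di = 1" using pp_unit unfolding pp by blast
  have solver: "\<exists>u w y z. u + y = pp^(k+1)*e3 \<and> w + z + a0*y + c0*u = pp^(k+1)*e2 \<and>
     a0*z + b0*y + c0*w + d0*u = pp^(k+1)*e1 \<and> b0*z + d0*w = pp^(k+1)*e0" for e3 e2 e1 e0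
    using solve4[OF ha0 hc0 hb0 Di[unfolded Dl_def]] unfolding q_def pp by blast
  have fprod: "[:p * \<beta> + \<zeta>, p * \<alpha>, 1:] * [:p * \<gamma> + \<zeta>, - (p * \<alpha>), 1:]
      = [:b0*d0, a0*d0 + b0*c0, b0 + d0 + a0*c0, a0 + c0, 1:]"
    unfolding a0_def b0_def c0_def d0_def by (rule poly_prod_quad)
  define G3 where "G3 = coeff g 3"
  define G2 where "G2 = coeff g 2"
  define G1 where "G1 = coeff g 1"
  define G0 where "G0 = coeff g 0"
  have cg: "\<And>i. p ^ (2 * k + 3) dvd (coeff g i - coeff [:b0*d0, a0*d0 + b0*c0, b0 + d0 + a0*c0, a0 + c0, 1:] i)"
    using g fprod by simp
  have neg: "x dvd a - b \<Longrightarrow> x dvd b - a" for x a b :: "'p padic"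
    by (metis dvd_minus_iff minus_diff_eq)
  have er: "pp^(2*k+3) dvd a0 + c0 - G3" "pp^(2*k+3) dvd b0 + d0 + a0*c0 - G2"
      "pp^(2*k+3) dvd a0*d0 + b0*c0 - G1" "pp^(2*k+3) dvd b0*d0 - G0"
    using neg[OF cg[of 3]] neg[OF cg[of 2]] neg[OF cg[of 1]] neg[OF cg[of 0]]
    unfolding G3_def G2_def G1_def G0_def pp[symmetric] by (simp_all add: numeral_3_eq_3 numeral_2_eq_2)
  obtain a b c d where abcd: "a + c = G3" "b + d + a*c = G2" "a*d + b*c = G1" "b*d = G0"
    using lift[OF solver er] by blast
  have "g = [:G0, G1, G2, G3, 1:]"
  proof (rule poly_eqI)
    fix n
    have dg: "degree g = 4" and lc: "coeff g (degree g) = 1" using g by blast+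
    have c4: "coeff g 4 = 1" using lc unfolding dg .
    have cbig: "coeff g n = 0" if "n > 4" using dg that by (simp add: coeff_eq_0)
    consider "n = 0" | "n = 1" | "n = 2" | "n = 3" | "n = 4" | "n > 4" by linarith
    then show "coeff g n = coeff [:G0, G1, G2, G3, 1:] n"
    proof cases
      case 5
      have "coeff [:G0, G1, G2, G3, 1:] 4 = 1" by (simp add: numeral_eq_Suc)
      then show ?thesis using c4 5 by simp
    next
      case 6
      then obtain j where "n = Suc (4 + j)" using less_imp_Suc_add by blast
      then show ?thesis using cbig 6 by (simp add: eval_nat_numeral)
    qed (simp_all add: G0_def G1_def G2_def G3_def c4 numeral_3_eq_3 numeral_2_eq_2 numeral_eq_Suc)
  qed
  also have "\<dots> = [:b, a, 1:] * [:d, c, 1:]" unfolding poly_prod_quad abcd ..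
  finally have "g = [:b, a, 1:] * [:d, c, 1:]" .
  then show "reducible_poly g" unfolding reducible_poly_def
    by (intro exI[of _ "[:b, a, 1:]"] exI[of _ "[:d, c, 1:]"]) simp
qed

end
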